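(* Let $\mathcal S$ and $\mathcal T$ be additive categories and let $T:\mathcal S\to\mathcal T$ be an additive functor admitting a left adjoint $S_\ell$. Then a morphism $g\in\mathcal S(A,B)$ is $\mathrm{add}(\mathrm{im}(S_\ell))$-epic if and only if $T(g)$ is a split epimorphism.
   Context: $\mathrm{add}(\mathrm{im}(S_\ell))$ is the full subcategory of $\mathcal S$ of direct summands of finite direct sums of objects of the form $S_\ell(C)$, $C$ in $\mathcal T$. For a full subcategory $\mathcal X$ of $\mathcal S$, a morphism $g\in\mathcal S(A,B)$ is $\mathcal X$-epic if for every object $X$ of $\mathcal X$ the map $\mathcal S(X,g):\mathcal S(X,A)\to\mathcal S(X,B)$ is surjective. *)

theory Defs
  imports Main
begin

text \<open>Objects of type 'o, morphisms of type 'm; Hom A B is the hom-set;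
  cmp g f is the composite g after f; pls/zer/ngt give the abelian group
  structure on each hom-set.\<close>

record ('o, 'm) addcat =
  Obj :: "'o set"
  Hom :: "'o \<Rightarrow> 'o \<Rightarrow> 'm set"
  cmp :: "'m \<Rightarrow> 'm \<Rightarrow> 'm"
  idm :: "'o \<Rightarrow> 'm"
  pls :: "'m \<Rightarrow> 'm \<Rightarrow> 'm"
  zer :: "'o \<Rightarrow> 'o \<Rightarrow> 'm"
  ngt :: "'m \<Rightarrow> 'm"

definition category :: "('o, 'm, 'x) addcat_scheme \<Rightarrow> bool" where
  "category C \<longleftrightarrow>
     (\<forall>A\<in>Obj C. idm C A \<in> Hom C A A) \<and>
     (\<forall>A\<in>Obj C. \<forall>B\<in>Obj C. \<forall>D\<in>Obj C. \<forall>f\<in>Hom C A B. \<forall>g\<in>Hom C B D.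
        cmp C g f \<in> Hom C A D) \<and>
     (\<forall>A\<in>Obj C. \<forall>B\<in>Obj C. \<forall>f\<in>Hom C A B.
        cmp C (idm C B) f = f \<and> cmp C f (idm C A) = f) \<and>
     (\<forall>A\<in>Obj C. \<forall>B\<in>Obj C. \<forall>D\<in>Obj C. \<forall>E\<in>Obj C.
        \<forall>f\<in>Hom C A B. \<forall>g\<in>Hom C B D. \<forall>h\<in>Hom C D E.
        cmp C h (cmp C g f) = cmp C (cmp C h g) f)"

definition preadditive :: "('o, 'm, 'x) addcat_scheme \<Rightarrow> bool" where
  "preadditive C \<longleftrightarrow> category C \<and>
     (\<forall>A\<in>Obj C. \<forall>B\<in>Obj C.
        zer C A B \<in> Hom C A B \<and>
        (\<forall>f\<in>Hom C A B. \<forall>g\<in>Hom C A B. pls C f g \<in> Hom C A B) \<and>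
        (\<forall>f\<in>Hom C A B. ngt C f \<in> Hom C A B) \<and>
        (\<forall>f\<in>Hom C A B. \<forall>g\<in>Hom C A B. \<forall>h\<in>Hom C A B.
           pls C (pls C f g) h = pls C f (pls C g h)) \<and>
        (\<forall>f\<in>Hom C A B. \<forall>g\<in>Hom C A B. pls C f g = pls C g f) \<and>
        (\<forall>f\<in>Hom C A B. pls C f (zer C A B) = f) \<and>
        (\<forall>f\<in>Hom C A B. pls C f (ngt C f) = zer C A B)) \<and>
     (\<forall>A\<in>Obj C. \<forall>B\<in>Obj C. \<forall>D\<in>Obj C.
        (\<forall>f\<in>Hom C A B. \<forall>f'\<in>Hom C A B. \<forall>g\<in>Hom C B D.
           cmp C g (pls C f f') = pls C (cmp C g f) (cmp C g f')) \<and>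
        (\<forall>f\<in>Hom C A B. \<forall>g\<in>Hom C B D. \<forall>g'\<in>Hom C B D.
           cmp C (pls C g g') f = pls C (cmp C g f) (cmp C g' f)))"

definition additive_category :: "('o, 'm, 'x) addcat_scheme \<Rightarrow> bool" where
  "additive_category C \<longleftrightarrow> preadditive C \<and>
     (\<exists>Z\<in>Obj C. idm C Z = zer C Z Z) \<and>
     (\<forall>A\<in>Obj C. \<forall>B\<in>Obj C. \<exists>Y\<in>Obj C.
        \<exists>i1\<in>Hom C A Y. \<exists>i2\<in>Hom C B Y. \<exists>p1\<in>Hom C Y A. \<exists>p2\<in>Hom C Y B.
          cmp C p1 i1 = idm C A \<and> cmp C p2 i2 = idm C B \<and>
          cmp C p1 i2 = zer C B A \<and> cmp C p2 i1 = zer C A B \<and>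
          pls C (cmp C i1 p1) (cmp C i2 p2) = idm C Y)"

definition is_functor ::
  "('o, 'm, 'x) addcat_scheme \<Rightarrow> ('p, 'n, 'y) addcat_scheme \<Rightarrow>
   ('o \<Rightarrow> 'p) \<Rightarrow> ('m \<Rightarrow> 'n) \<Rightarrow> bool" where
  "is_functor C D Fo Fm \<longleftrightarrow>
     (\<forall>A\<in>Obj C. Fo A \<in> Obj D) \<and>
     (\<forall>A\<in>Obj C. \<forall>B\<in>Obj C. \<forall>f\<in>Hom C A B. Fm f \<in> Hom D (Fo A) (Fo B)) \<and>
     (\<forall>A\<in>Obj C. Fm (idm C A) = idm D (Fo A)) \<and>
     (\<forall>A\<in>Obj C. \<forall>B\<in>Obj C. \<forall>E\<in>Obj C. \<forall>f\<in>Hom C A B. \<forall>g\<in>Hom C B E.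
        Fm (cmp C g f) = cmp D (Fm g) (Fm f))"

definition additive_functor ::
  "('o, 'm, 'x) addcat_scheme \<Rightarrow> ('p, 'n, 'y) addcat_scheme \<Rightarrow>
   ('o \<Rightarrow> 'p) \<Rightarrow> ('m \<Rightarrow> 'n) \<Rightarrow> bool" where
  "additive_functor C D Fo Fm \<longleftrightarrow> is_functor C D Fo Fm \<and>
     (\<forall>A\<in>Obj C. \<forall>B\<in>Obj C. \<forall>f\<in>Hom C A B. \<forall>g\<in>Hom C A B.
        Fm (pls C f g) = pls D (Fm f) (Fm g))"

definition left_adjoint ::
  "('o, 'm, 'x) addcat_scheme \<Rightarrow> ('p, 'n, 'y) addcat_scheme \<Rightarrow>
   ('p \<Rightarrow> 'o) \<Rightarrow> ('n \<Rightarrow> 'm) \<Rightarrow> ('o \<Rightarrow> 'p) \<Rightarrow> ('m \<Rightarrow> 'n) \<Rightarrow> bool" where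
  "left_adjoint C D Lo Lm Ro Rm \<longleftrightarrow>
     is_functor D C Lo Lm \<and> is_functor C D Ro Rm \<and>
     (\<exists>phi :: 'p \<Rightarrow> 'o \<Rightarrow> 'm \<Rightarrow> 'n.
        (\<forall>X\<in>Obj D. \<forall>A\<in>Obj C. bij_betw (phi X A) (Hom C (Lo X) A) (Hom D X (Ro A))) \<and>
        (\<forall>X\<in>Obj D. \<forall>X'\<in>Obj D. \<forall>A\<in>Obj C. \<forall>A'\<in>Obj C.
           \<forall>c\<in>Hom D X' X. \<forall>h\<in>Hom C A A'. \<forall>f\<in>Hom C (Lo X) A.
             phi X' A' (cmp C h (cmp C f (Lm c))) = cmp D (Rm h) (cmp D (phi X A f) c)))"

fun msum :: "('o, 'm, 'x) addcat_scheme \<Rightarrow> 'o \<Rightarrow> 'o \<Rightarrow> (nat \<Rightarrow> 'm) \<Rightarrow> nat \<Rightarrow> 'm" where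
  "msum C A B f 0 = zer C A B"
| "msum C A B f (Suc n) = pls C (msum C A B f n) (f n)"

definition is_direct_sum ::
  "('o, 'm, 'x) addcat_scheme \<Rightarrow> 'o \<Rightarrow> nat \<Rightarrow> (nat \<Rightarrow> 'o) \<Rightarrow> bool" where
  "is_direct_sum C Y n Ys \<longleftrightarrow> Y \<in> Obj C \<and> (\<forall>k<n. Ys k \<in> Obj C) \<and>
     (\<exists>\<iota> \<pi>. (\<forall>k<n. \<iota> k \<in> Hom C (Ys k) Y \<and> \<pi> k \<in> Hom C Y (Ys k)) \<and>
        (\<forall>j<n. \<forall>k<n. cmp C (\<pi> j) (\<iota> k) = (if j = k then idm C (Ys k) else zer C (Ys k) (Ys j))) \<and>
        msum C Y Y (\<lambda>k. cmp C (\<iota> k) (\<pi> k)) n = idm C Y)"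

definition direct_summand :: "('o, 'm, 'x) addcat_scheme \<Rightarrow> 'o \<Rightarrow> 'o \<Rightarrow> bool" where
  "direct_summand C X Y \<longleftrightarrow> X \<in> Obj C \<and> Y \<in> Obj C \<and>
     (\<exists>i\<in>Hom C X Y. \<exists>p\<in>Hom C Y X. cmp C p i = idm C X)"

definition add_im :: "('o, 'm, 'x) addcat_scheme \<Rightarrow> ('p, 'n, 'y) addcat_scheme \<Rightarrow>
   ('p \<Rightarrow> 'o) \<Rightarrow> 'o set" where
  "add_im C D Fo = {X. \<exists>n Cs Y. (\<forall>k<n. Cs k \<in> Obj D) \<and>
       is_direct_sum C Y n (\<lambda>k. Fo (Cs k)) \<and> direct_summand C X Y}"

definition epic_wrt :: "('o, 'm, 'x) addcat_scheme \<Rightarrow> 'o set \<Rightarrow> 'o \<Rightarrow> 'o \<Rightarrow> 'm \<Rightarrow> bool" where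
  "epic_wrt C \<X> A B g \<longleftrightarrow>
     (\<forall>X\<in>\<X>. X \<in> Obj C \<longrightarrow> (\<forall>h\<in>Hom C X B. \<exists>f\<in>Hom C X A. cmp C g f = h))"

definition split_epi :: "('o, 'm, 'x) addcat_scheme \<Rightarrow> 'o \<Rightarrow> 'o \<Rightarrow> 'm \<Rightarrow> bool" where
  "split_epi C A B g \<longleftrightarrow> (\<exists>s\<in>Hom C B A. cmp C g s = idm C B)"

end

theory Submission
  imports Defs
begin

lemma cat_id: "category C \<Longrightarrow> A \<in> Obj C \<Longrightarrow> idm C A \<in> Hom C A A"
  unfolding category_def by blast
lemma cat_comp: "category C \<Longrightarrow> A \<in> Obj C \<Longrightarrow> B \<in> Obj C \<Longrightarrow> D \<in> Obj C \<Longrightarrow>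
   f \<in> Hom C A B \<Longrightarrow> g \<in> Hom C B D \<Longrightarrow> cmp C g f \<in> Hom C A D"
  unfolding category_def by blast
lemma cat_idl: "category C \<Longrightarrow> A \<in> Obj C \<Longrightarrow> B \<in> Obj C \<Longrightarrow> f \<in> Hom C A B \<Longrightarrow> cmp C (idm C B) f = f"
  unfolding category_def by blast
lemma cat_idr: "category C \<Longrightarrow> A \<in> Obj C \<Longrightarrow> B \<in> Obj C \<Longrightarrow> f \<in> Hom C A B \<Longrightarrow> cmp C f (idm C A) = f"
  unfolding category_def by blast
lemma cat_assoc: "category C \<Longrightarrow> A \<in> Obj C \<Longrightarrow> B \<in> Obj C \<Longrightarrow> D \<in> Obj C \<Longrightarrow> E \<in> Obj C \<Longrightarrow>
   f \<in> Hom C A B \<Longrightarrow> g \<in> Hom C B D \<Longrightarrow> h \<in> Hom C D E \<Longrightarrow>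
   cmp C h (cmp C g f) = cmp C (cmp C h g) f"
  unfolding category_def by blast

lemma pre_cat: "preadditive C \<Longrightarrow> category C" unfolding preadditive_def by meson
lemma pre_zer: "preadditive C \<Longrightarrow> A \<in> Obj C \<Longrightarrow> B \<in> Obj C \<Longrightarrow> zer C A B \<in> Hom C A B"
  unfolding preadditive_def by meson
lemma pre_pls: "preadditive C \<Longrightarrow> A \<in> Obj C \<Longrightarrow> B \<in> Obj C \<Longrightarrow> f \<in> Hom C A B \<Longrightarrow> g \<in> Hom C A B \<Longrightarrow> pls C f g \<in> Hom C A B"
  unfolding preadditive_def by meson
lemma pre_ngt: "preadditive C \<Longrightarrow> A \<in> Obj C \<Longrightarrow> B \<in> Obj C \<Longrightarrow> f \<in> Hom C A B \<Longrightarrow> ngt C f \<in> Hom C A B"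
  unfolding preadditive_def by meson
lemma pre_assoc: "preadditive C \<Longrightarrow> A \<in> Obj C \<Longrightarrow> B \<in> Obj C \<Longrightarrow> f \<in> Hom C A B \<Longrightarrow> g \<in> Hom C A B \<Longrightarrow> h \<in> Hom C A B \<Longrightarrow>
   pls C (pls C f g) h = pls C f (pls C g h)"
  unfolding preadditive_def by meson
lemma pre_comm: "preadditive C \<Longrightarrow> A \<in> Obj C \<Longrightarrow> B \<in> Obj C \<Longrightarrow> f \<in> Hom C A B \<Longrightarrow> g \<in> Hom C A B \<Longrightarrow> pls C f g = pls C g f"
  unfolding preadditive_def by meson
lemma pre_z: "preadditive C \<Longrightarrow> A \<in> Obj C \<Longrightarrow> B \<in> Obj C \<Longrightarrow> f \<in> Hom C A B \<Longrightarrow> pls C f (zer C A B) = f"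
  unfolding preadditive_def by meson
lemma pre_n: "preadditive C \<Longrightarrow> A \<in> Obj C \<Longrightarrow> B \<in> Obj C \<Longrightarrow> f \<in> Hom C A B \<Longrightarrow> pls C f (ngt C f) = zer C A B"
  unfolding preadditive_def by meson
lemma pre_dl: "preadditive C \<Longrightarrow> A \<in> Obj C \<Longrightarrow> B \<in> Obj C \<Longrightarrow> D \<in> Obj C \<Longrightarrow>
   f \<in> Hom C A B \<Longrightarrow> f' \<in> Hom C A B \<Longrightarrow> g \<in> Hom C B D \<Longrightarrow>
   cmp C g (pls C f f') = pls C (cmp C g f) (cmp C g f')"
  unfolding preadditive_def by meson
lemma pre_dr: "preadditive C \<Longrightarrow> A \<in> Obj C \<Longrightarrow> B \<in> Obj C \<Longrightarrow> D \<in> Obj C \<Longrightarrow>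
   f \<in> Hom C A B \<Longrightarrow> g \<in> Hom C B D \<Longrightarrow> g' \<in> Hom C B D \<Longrightarrow>
   cmp C (pls C g g') f = pls C (cmp C g f) (cmp C g' f)"
  unfolding preadditive_def by meson

lemma idem_zero:
  assumes P: "preadditive C" and A: "A \<in> Obj C" and B: "B \<in> Obj C" and x: "x \<in> Hom C A B"
    and e: "pls C x x = x"
  shows "x = zer C A B"
proof -
  have "zer C A B = pls C x (ngt C x)" using pre_n[OF P A B x] by simp
  also have "\<dots> = pls C (pls C x x) (ngt C x)" using e by simp
  also have "\<dots> = pls C x (pls C x (ngt C x))" using pre_assoc[OF P A B x x pre_ngt[OF P A B x]] .
  also have "\<dots> = x" using pre_n[OF P A B x] pre_z[OF P A B x] by simp
  finally show ?thesis by simp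
qed

lemma cmp_zer:
  assumes P: "preadditive C" and A: "A \<in> Obj C" and B: "B \<in> Obj C" and D: "D \<in> Obj C"
    and u: "u \<in> Hom C B D"
  shows "cmp C u (zer C A B) = zer C A D"
proof -
  have z: "zer C A B \<in> Hom C A B" using pre_zer[OF P A B] .
  have zz: "pls C (zer C A B) (zer C A B) = zer C A B" using pre_z[OF P A B z] .
  have h: "cmp C u (zer C A B) \<in> Hom C A D" using cat_comp[OF pre_cat[OF P] A B D z u] .
  have "pls C (cmp C u (zer C A B)) (cmp C u (zer C A B)) = cmp C u (zer C A B)"
    using pre_dl[OF P A B D z z u] zz by simp
  then show ?thesis using idem_zero[OF P A D h] by simp
qed

lemma zer_cmp:
  assumes P: "preadditive C" and A: "A \<in> Obj C" and B: "B \<in> Obj C" and D: "D \<in> Obj C"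
    and v: "v \<in> Hom C A B"
  shows "cmp C (zer C B D) v = zer C A D"
proof -
  have z: "zer C B D \<in> Hom C B D" using pre_zer[OF P B D] .
  have zz: "pls C (zer C B D) (zer C B D) = zer C B D" using pre_z[OF P B D z] .
  have h: "cmp C (zer C B D) v \<in> Hom C A D" using cat_comp[OF pre_cat[OF P] A B D v z] .
  have "pls C (cmp C (zer C B D) v) (cmp C (zer C B D) v) = cmp C (zer C B D) v"
    using pre_dr[OF P A B D v z z] zz by simp
  then show ?thesis using idem_zero[OF P A D h] by simp
qed

lemma msum_hom:
  assumes P: "preadditive C" and A: "A \<in> Obj C" and B: "B \<in> Obj C"
  shows "(\<forall>k<n. F k \<in> Hom C A B) \<Longrightarrow> msum C A B F n \<in> Hom C A B"
  by (induction n) (auto intro: pre_zer[OF P A B] pre_pls[OF P A B])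

lemma msum_cong:
  shows "(\<forall>k<n. F k = G k) \<Longrightarrow> msum C A B F n = msum C A B G n"
  by (induction n) auto

lemma cmp_msum:
  assumes P: "preadditive C" and A: "A \<in> Obj C" and B: "B \<in> Obj C" and D: "D \<in> Obj C"
    and u: "u \<in> Hom C B D"
  shows "(\<forall>k<n. F k \<in> Hom C A B) \<Longrightarrow> cmp C u (msum C A B F n) = msum C A D (\<lambda>k. cmp C u (F k)) n"
proof (induction n)
  case 0 then show ?case using cmp_zer[OF P A B D u] by simp
next
  case (Suc n)
  then have h: "msum C A B F n \<in> Hom C A B" "F n \<in> Hom C A B" using msum_hom[OF P A B] by auto
  show ?case using pre_dl[OF P A B D h u] Suc by simp
qed

lemma msum_cmp:
  assumes P: "preadditive C" and A: "A \<in> Obj C" and B: "B \<in> Obj C" and D: "D \<in> Obj C"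
    and v: "v \<in> Hom C D A"
  shows "(\<forall>k<n. F k \<in> Hom C A B) \<Longrightarrow> cmp C (msum C A B F n) v = msum C D B (\<lambda>k. cmp C (F k) v) n"
proof (induction n)
  case 0 then show ?case using zer_cmp[OF P D A B v] by simp
next
  case (Suc n)
  then have h: "msum C A B F n \<in> Hom C A B" "F n \<in> Hom C A B" using msum_hom[OF P A B] by auto
  show ?case using pre_dr[OF P D A B v h] Suc by simp
qed

theorem lemma2p2:
  fixes SC :: "('a, 'b, 'x) addcat_scheme"
    and TC :: "('c, 'd, 'y) addcat_scheme"
    and To :: "'a \<Rightarrow> 'c" and Tm :: "'b \<Rightarrow> 'd"
    and So :: "'c \<Rightarrow> 'a" and Sm :: "'d \<Rightarrow> 'b"
  assumes "additive_category SC" and "additive_category TC"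
    and "additive_functor SC TC To Tm"
    and "left_adjoint SC TC So Sm To Tm"
    and "A \<in> Obj SC" and "B \<in> Obj SC" and "g \<in> Hom SC A B"
  shows "epic_wrt SC (add_im SC TC So) A B g \<longleftrightarrow> split_epi TC (To A) (To B) (Tm g)"
proof -
  have PS: "preadditive SC" using assms(1) unfolding additive_category_def by blast
  have PT: "preadditive TC" using assms(2) unfolding additive_category_def by blast
  have CS: "category SC" using pre_cat[OF PS] .
  have CT: "category TC" using pre_cat[OF PT] .
  have FS: "is_functor TC SC So Sm" and FT: "is_functor SC TC To Tm"
    using assms(4) unfolding left_adjoint_def by auto
  obtain phi :: "'c \<Rightarrow> 'a \<Rightarrow> 'b \<Rightarrow> 'd" where
    bij0: "\<forall>X\<in>Obj TC. \<forall>A\<in>Obj SC. bij_betw (phi X A) (Hom SC (So X) A) (Hom TC X (To A))" and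
    nat0: "\<forall>X\<in>Obj TC. \<forall>X'\<in>Obj TC. \<forall>A\<in>Obj SC. \<forall>A'\<in>Obj SC.
           \<forall>c\<in>Hom TC X' X. \<forall>h\<in>Hom SC A A'. \<forall>f\<in>Hom SC (So X) A.
             phi X' A' (cmp SC h (cmp SC f (Sm c))) = cmp TC (Tm h) (cmp TC (phi X A f) c)"
    using assms(4) unfolding left_adjoint_def by blast
  have bij: "\<And>X A. X \<in> Obj TC \<Longrightarrow> A \<in> Obj SC \<Longrightarrow> bij_betw (phi X A) (Hom SC (So X) A) (Hom TC X (To A))"
    using bij0 by blast
  have nat: "\<And>X X' A A' c h f. X \<in> Obj TC \<Longrightarrow> X' \<in> Obj TC \<Longrightarrow> A \<in> Obj SC \<Longrightarrow> A' \<in> Obj SC \<Longrightarrow>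
       c \<in> Hom TC X' X \<Longrightarrow> h \<in> Hom SC A A' \<Longrightarrow> f \<in> Hom SC (So X) A \<Longrightarrow>
       phi X' A' (cmp SC h (cmp SC f (Sm c))) = cmp TC (Tm h) (cmp TC (phi X A f) c)"
    using nat0 by blast
  have SoO: "\<And>X. X \<in> Obj TC \<Longrightarrow> So X \<in> Obj SC" using FS unfolding is_functor_def by blast
  have SmI: "\<And>X. X \<in> Obj TC \<Longrightarrow> Sm (idm TC X) = idm SC (So X)" using FS unfolding is_functor_def by blast
  have ToO: "\<And>X. X \<in> Obj SC \<Longrightarrow> To X \<in> Obj TC" using FT unfolding is_functor_def by blast
  have TmH: "\<And>X Y f. X \<in> Obj SC \<Longrightarrow> Y \<in> Obj SC \<Longrightarrow> f \<in> Hom SC X Y \<Longrightarrow> Tm f \<in> Hom TC (To X) (To Y)"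
    using FT unfolding is_functor_def by blast
  have phiH: "\<And>X A f. X \<in> Obj TC \<Longrightarrow> A \<in> Obj SC \<Longrightarrow> f \<in> Hom SC (So X) A \<Longrightarrow> phi X A f \<in> Hom TC X (To A)"
    using bij bij_betwE by blast
  have nat1: "\<And>X A A' h f. X \<in> Obj TC \<Longrightarrow> A \<in> Obj SC \<Longrightarrow> A' \<in> Obj SC \<Longrightarrow>
       h \<in> Hom SC A A' \<Longrightarrow> f \<in> Hom SC (So X) A \<Longrightarrow>
       phi X A' (cmp SC h f) = cmp TC (Tm h) (phi X A f)"
  proof -
    fix X A A' h f assume X: "X \<in> Obj TC" and A: "A \<in> Obj SC" and A': "A' \<in> Obj SC"
      and h: "h \<in> Hom SC A A'" and f: "f \<in> Hom SC (So X) A"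
    have "phi X A' (cmp SC h (cmp SC f (Sm (idm TC X)))) = cmp TC (Tm h) (cmp TC (phi X A f) (idm TC X))"
      using nat[OF X X A A' cat_id[OF CT X] h f] .
    then show "phi X A' (cmp SC h f) = cmp TC (Tm h) (phi X A f)"
      using SmI[OF X] cat_idr[OF CS SoO[OF X] A f] cat_idr[OF CT X ToO[OF A] phiH[OF X A f]] by simp
  qed
  have AO: "A \<in> Obj SC" and BO: "B \<in> Obj SC" and gH: "g \<in> Hom SC A B" using assms by auto
  show ?thesis
  proof
    assume ep: "epic_wrt SC (add_im SC TC So) A B g"
    define TB where "TB = To B"
    have TB: "TB \<in> Obj TC" using ToO[OF BO] TB_def by simp
    define X where "X = So TB"
    have XO: "X \<in> Obj SC" using SoO[OF TB] X_def by simp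
    have idX: "idm SC X \<in> Hom SC X X" using cat_id[OF CS XO] .
    have "is_direct_sum SC X 1 (\<lambda>k. So TB)"
      unfolding is_direct_sum_def
    proof (intro conjI exI[of _ "\<lambda>k. idm SC X"])
      show "msum SC X X (\<lambda>k. cmp SC (idm SC X) (idm SC X)) 1 = idm SC X"
        using cat_idl[OF CS XO XO idX] pre_comm[OF PS XO XO idX pre_zer[OF PS XO XO]] pre_z[OF PS XO XO idX]
        by simp
      next
      have "cmp SC (idm SC (So TB)) (idm SC (So TB)) = idm SC (So TB)"
        using cat_idl[OF CS XO XO idX] unfolding X_def .
      then show "\<forall>j<(1::nat). \<forall>k<(1::nat). cmp SC (idm SC X) (idm SC X) = (if j = k then idm SC (So TB) else zer SC (So TB) (So TB))"
        unfolding X_def by simp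
    qed (use XO idX TB in \<open>simp_all add: X_def\<close>)
    moreover have "direct_summand SC X X" unfolding direct_summand_def
      using XO idX cat_idl[OF CS XO XO idX] by blast
    ultimately have "X \<in> add_im SC TC So" unfolding add_im_def
      using TB by (intro CollectI exI[of _ 1] exI[of _ "\<lambda>k. TB"] exI[of _ X]) auto
    have "idm TC TB \<in> phi TB B ` Hom SC X B"
      using bij[OF TB BO] cat_id[OF CT TB] unfolding X_def TB_def bij_betw_def by simp
    then obtain eps where eps: "eps \<in> Hom SC X B" "phi TB B eps = idm TC TB" by auto
    obtain f where f: "f \<in> Hom SC X A" "cmp SC g f = eps"
      using ep \<open>X \<in> add_im SC TC So\<close> XO eps(1) unfolding epic_wrt_def by blast
    have sH: "phi TB A f \<in> Hom TC (To B) (To A)" using phiH[OF TB AO] f(1) X_def TB_def by simp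
    have "cmp TC (Tm g) (phi TB A f) = phi TB B (cmp SC g f)"
      using nat1[OF TB AO BO gH] f(1) X_def by simp
    also have "\<dots> = idm TC (To B)" using f(2) eps(2) TB_def by simp
    finally show "split_epi TC (To A) (To B) (Tm g)" unfolding split_epi_def using sH by blast
  next
    assume "split_epi TC (To A) (To B) (Tm g)"
    then obtain s where sH: "s \<in> Hom TC (To B) (To A)" and sg: "cmp TC (Tm g) s = idm TC (To B)"
      unfolding split_epi_def by blast
    have lift: "\<exists>f\<in>Hom SC (So Cc) A. cmp SC g f = q" if Cc: "Cc \<in> Obj TC" and q: "q \<in> Hom SC (So Cc) B" for Cc q
    proof -
      have pq: "phi Cc B q \<in> Hom TC Cc (To B)" using phiH[OF Cc BO q] .
      define t where "t = cmp TC s (phi Cc B q)"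
      have t: "t \<in> Hom TC Cc (To A)" unfolding t_def using cat_comp[OF CT Cc ToO[OF BO] ToO[OF AO] pq sH] .
      have "t \<in> phi Cc A ` Hom SC (So Cc) A" using bij[OF Cc AO] t unfolding bij_betw_def by simp
      then obtain f where f: "f \<in> Hom SC (So Cc) A" "phi Cc A f = t" by auto
      have gf: "cmp SC g f \<in> Hom SC (So Cc) B" using cat_comp[OF CS SoO[OF Cc] AO BO f(1) gH] .
      have "phi Cc B (cmp SC g f) = cmp TC (Tm g) t" using nat1[OF Cc AO BO gH f(1)] f(2) by simp
      also have "\<dots> = cmp TC (cmp TC (Tm g) s) (phi Cc B q)" unfolding t_def
        using cat_assoc[OF CT Cc ToO[OF BO] ToO[OF AO] ToO[OF BO] pq sH TmH[OF AO BO gH]] .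
      also have "\<dots> = phi Cc B q" using sg cat_idl[OF CT Cc ToO[OF BO] pq] by simp
      finally have "cmp SC g f = q" using bij[OF Cc BO] gf q unfolding bij_betw_def inj_on_def by blast
      then show ?thesis using f(1) by blast
    qed
    show "epic_wrt SC (add_im SC TC So) A B g" unfolding epic_wrt_def
    proof (intro ballI impI)
      fix X h assume "X \<in> add_im SC TC So" and XO: "X \<in> Obj SC" and h: "h \<in> Hom SC X B"
      then obtain n Cs Y where Cs: "\<forall>k<n. Cs k \<in> Obj TC" and ds: "is_direct_sum SC Y n (\<lambda>k. So (Cs k))"
        and sm: "direct_summand SC X Y" unfolding add_im_def by blast
      have YO: "Y \<in> Obj SC" using ds unfolding is_direct_sum_def by blast
      obtain i p where i: "i \<in> Hom SC X Y" and p: "p \<in> Hom SC Y X" and pi: "cmp SC p i = idm SC X"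
        using sm unfolding direct_summand_def by blast
      obtain \<iota> \<pi> where ip: "\<forall>k<n. \<iota> k \<in> Hom SC (So (Cs k)) Y \<and> \<pi> k \<in> Hom SC Y (So (Cs k))"
        and sumid: "msum SC Y Y (\<lambda>k. cmp SC (\<iota> k) (\<pi> k)) n = idm SC Y"
        using ds unfolding is_direct_sum_def by blast
      have CkO: "\<And>k. k < n \<Longrightarrow> So (Cs k) \<in> Obj SC" using Cs SoO by blast
      define hp where "hp = cmp SC h p"
      have hp: "hp \<in> Hom SC Y B" unfolding hp_def using cat_comp[OF CS YO XO BO p h] .
      have "\<forall>k. \<exists>f. k < n \<longrightarrow> f \<in> Hom SC (So (Cs k)) A \<and> cmp SC g f = cmp SC hp (\<iota> k)"
      proof
        fix k show "\<exists>f. k < n \<longrightarrow> f \<in> Hom SC (So (Cs k)) A \<and> cmp SC g f = cmp SC hp (\<iota> k)"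
        proof (cases "k < n")
          case True
          have "cmp SC hp (\<iota> k) \<in> Hom SC (So (Cs k)) B"
            using cat_comp[OF CS CkO[OF True] YO BO _ hp] ip True by blast
          then show ?thesis using lift Cs True by blast
        qed simp
      qed
      then have "\<exists>F. \<forall>k. k < n \<longrightarrow> F k \<in> Hom SC (So (Cs k)) A \<and> cmp SC g (F k) = cmp SC hp (\<iota> k)"
        by (rule choice)
      then obtain F where F0: "\<forall>k. k < n \<longrightarrow> F k \<in> Hom SC (So (Cs k)) A \<and> cmp SC g (F k) = cmp SC hp (\<iota> k)"
        by blast
      have F: "\<And>k. k < n \<Longrightarrow> F k \<in> Hom SC (So (Cs k)) A \<and> cmp SC g (F k) = cmp SC hp (\<iota> k)"
        using F0 by blast
      define G where "G = (\<lambda>k. cmp SC (F k) (\<pi> k))"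
      have GH: "\<forall>k<n. G k \<in> Hom SC Y A" unfolding G_def
        using F ip cat_comp[OF CS YO CkO AO] by blast
      define F' where "F' = msum SC Y A G n"
      have F'H: "F' \<in> Hom SC Y A" unfolding F'_def using msum_hom[OF PS YO AO] GH by blast
      have ipH: "\<forall>k<n. cmp SC (\<iota> k) (\<pi> k) \<in> Hom SC Y Y" using ip cat_comp[OF CS YO CkO YO] by blast
      have "cmp SC g F' = msum SC Y B (\<lambda>k. cmp SC g (G k)) n"
        unfolding F'_def using cmp_msum[OF PS YO AO BO gH] GH by blast
      also have "\<dots> = msum SC Y B (\<lambda>k. cmp SC hp (cmp SC (\<iota> k) (\<pi> k))) n"
      proof (rule msum_cong, intro allI impI)
        fix k assume k: "k < n"
        have "cmp SC g (G k) = cmp SC (cmp SC g (F k)) (\<pi> k)" unfolding G_def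
          using cat_assoc[OF CS YO CkO[OF k] AO BO _ _ gH] ip F k by blast
        also have "\<dots> = cmp SC (cmp SC hp (\<iota> k)) (\<pi> k)" using F k by simp
        also have "\<dots> = cmp SC hp (cmp SC (\<iota> k) (\<pi> k))"
          using cat_assoc[OF CS YO CkO[OF k] YO BO _ _ hp, of "\<pi> k" "\<iota> k"] ip k by simp
        finally show "cmp SC g (G k) = cmp SC hp (cmp SC (\<iota> k) (\<pi> k))" .
      qed
      also have "\<dots> = cmp SC hp (msum SC Y Y (\<lambda>k. cmp SC (\<iota> k) (\<pi> k)) n)"
        using cmp_msum[OF PS YO YO BO hp, of n "\<lambda>k. cmp SC (\<iota> k) (\<pi> k)"] ipH by simp
      also have "\<dots> = hp" using sumid cat_idr[OF CS YO BO hp] by simp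
      finally have gF': "cmp SC g F' = hp" .
      have fH: "cmp SC F' i \<in> Hom SC X A" using cat_comp[OF CS XO YO AO i F'H] .
      have "cmp SC g (cmp SC F' i) = cmp SC (cmp SC g F') i"
        using cat_assoc[OF CS XO YO AO BO i F'H gH] .
      also have "\<dots> = cmp SC h (cmp SC p i)" unfolding gF' hp_def
        using cat_assoc[OF CS XO YO XO BO i p h] by simp
      also have "\<dots> = h" using pi cat_idr[OF CS XO BO h] by simp
      finally show "\<exists>f\<in>Hom SC X A. cmp SC g f = h" using fH by blast
    qed
  qed
qed

end
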